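(* Let $\mathcal{M},\mathcal{Y},\mathcal{S}'$ be finite sets and $\{g_{s'}\}_{s'\in\mathcal{S}'}$, $g_{s'}:\mathcal{M}\times\mathcal{Y}\to\mathcal{Y}$, a family such that (i) $\Pr_{S'}[g_{S'}(m,y)=g_{S'}(\hat m,\hat y)]\le1/|\mathcal{Y}|$ for all $(m,y)\ne(\hat m,\hat y)$ when $S'$ is uniform on $\mathcal{S}'$, and (ii) for every $m\in\mathcal{M}$, $c\in\mathcal{Y}$, $s'\in\mathcal{S}'$ there is a unique $y\in\mathcal{Y}$ with $g_{s'}(m,y)=c$. Let $M'=(M,Y)$ be uniformly distributed on $\mathcal{M}\times\mathcal{Y}$ and correlated with a quantum system $E'$ via the cq state $\rho_{M'E'}=\sum_{m,y}\frac{1}{|\mathcal{M}||\mathcal{Y}|}|m,y\rangle\langle m,y|\otimes\rho_{E'}^{m,y}$. Let $S'$ be uniform on $\mathcal{S}'$ and independent of $(M',E')$, and $C:=g_{S'}(M,Y)$. Then $$d(M;E'S'C)\le d(M';E').$$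
   Context: For a cq state $\rho_{VF}=\sum_vP_V(v)|v\rangle\langle v|\otimes\rho_F^v$ with $V$ taking values in a finite set $\mathcal{V}$, $d(V;F):=\min_{\sigma_F}\|\rho_{VF}-P_{\mathcal{V}}\otimes\sigma_F\|_1$, where $P_{\mathcal{V}}$ is the uniform distribution on $\mathcal{V}$ (as a diagonal density operator) and the minimum is over states $\sigma_F$. In $d(M;E'S'C)$ the system consists of $E'$ together with classical registers holding $S'$ and $C$. *)

theory Defs
  imports Complex_Main
begin

text \<open>Finite-dimensional operators on the Hilbert space with orthonormal basis
  indexed by a finite type 'n are represented by their matrices.\<close>

type_synonym 'n op = "'n \<Rightarrow> 'n \<Rightarrow> complex"

definition opmult :: "('n::finite) op \<Rightarrow> 'n op \<Rightarrow> 'n op" where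
  "opmult A B = (\<lambda>i k. \<Sum>j\<in>UNIV. A i j * B j k)"

definition adj :: "('n::finite) op \<Rightarrow> 'n op" where
  "adj A = (\<lambda>i j. cnj (A j i))"

definition tr :: "('n::finite) op \<Rightarrow> complex" where
  "tr A = (\<Sum>i\<in>UNIV. A i i)"

definition psd :: "('n::finite) op \<Rightarrow> bool" where
  "psd A \<longleftrightarrow> (\<forall>x::'n \<Rightarrow> complex.
      Im (\<Sum>i\<in>UNIV. \<Sum>j\<in>UNIV. cnj (x i) * A i j * x j) = 0 \<and>
      Re (\<Sum>i\<in>UNIV. \<Sum>j\<in>UNIV. cnj (x i) * A i j * x j) \<ge> 0)"

definition density :: "('n::finite) op \<Rightarrow> bool" where
  "density A \<longleftrightarrow> psd A \<and> tr A = 1"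

definition absop :: "('n::finite) op \<Rightarrow> 'n op" where
  "absop A = (THE B. psd B \<and> opmult B B = opmult (adj A) A)"

definition tnorm :: "('n::finite) op \<Rightarrow> real" where
  "tnorm A = Re (tr (absop A))"

definition tensor :: "'a op \<Rightarrow> 'b op \<Rightarrow> ('a \<times> 'b) op" where
  "tensor A B = (\<lambda>(i, k) (j, l). A i j * B k l)"

definition unif_op :: "('v::finite) op" where
  "unif_op = (\<lambda>v w. if v = w then 1 / of_nat (card (UNIV :: 'v set)) else 0)"

text \<open>cq state sum_v P(v) |v><v| \<otimes> rho^v.\<close>
definition cq :: "('v \<Rightarrow> real) \<Rightarrow> ('v \<Rightarrow> 'f op) \<Rightarrow> ('v \<times> 'f) op" where
  "cq P rho = (\<lambda>(v, i) (w, j). if v = w then complex_of_real (P v) * rho v i j else 0)"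

definition dcq :: "(('v::finite) \<Rightarrow> real) \<Rightarrow> ('v \<Rightarrow> ('f::finite) op) \<Rightarrow> real" where
  "dcq P rho = Inf {tnorm (\<lambda>a b. cq P rho a b - tensor unif_op sigma a b) | sigma::'f op. density sigma}"

end

theory Submission
  imports Defs "HOL-Analysis.Cartesian_Euclidean_Space" "HOL-Library.Function_Algebras" begin

definition cinner :: "('n::finite \<Rightarrow> complex) \<Rightarrow> ('n \<Rightarrow> complex) \<Rightarrow> complex" where
  "cinner x y = (\<Sum>i\<in>UNIV. cnj (x i) * y i)"

definition mv :: "('n::finite) op \<Rightarrow> ('n \<Rightarrow> complex) \<Rightarrow> ('n \<Rightarrow> complex)" where
  "mv A x = (\<lambda>i. \<Sum>j\<in>UNIV. A i j * x j)"

definition scl :: "complex \<Rightarrow> ('n \<Rightarrow> complex) \<Rightarrow> ('n \<Rightarrow> complex)" where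
  "scl c x = (\<lambda>i. c * x i)"

lemma cinner_add_right: "cinner x (y + z) = cinner x y + cinner x z"
  by (simp add: cinner_def distrib_left sum.distrib)
lemma cinner_add_left: "cinner (x + y) z = cinner x z + cinner y z"
  by (simp add: cinner_def distrib_right sum.distrib)
lemma cinner_diff_right: "cinner x (y - z) = cinner x y - cinner x z"
  by (simp add: cinner_def right_diff_distrib sum_subtractf)
lemma cinner_diff_left: "cinner (x - y) z = cinner x z - cinner y z"
  by (simp add: cinner_def left_diff_distrib sum_subtractf)
lemma cinner_scl_right: "cinner x (scl c y) = c * cinner x y"
  by (simp add: cinner_def scl_def sum_distrib_left algebra_simps)
lemma cinner_scl_left: "cinner (scl c x) y = cnj c * cinner x y"
  by (simp add: cinner_def scl_def sum_distrib_left algebra_simps)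
lemma cinner_commute: "cinner y x = cnj (cinner x y)"
  by (simp add: cinner_def mult.commute)
lemma cinner_zero_right[simp]: "cinner x 0 = 0" by (simp add: cinner_def)
lemma cinner_zero_left[simp]: "cinner 0 x = 0" by (simp add: cinner_def)

lemma cinner_self: "cinner x x = of_real (\<Sum>i\<in>UNIV. (cmod (x i))\<^sup>2)"
  unfolding cinner_def of_real_sum
  by (rule sum.cong) (simp_all only: complex_norm_square mult.commute)

lemma cinner_self_Re: "Re (cinner x x) = (\<Sum>i\<in>UNIV. (cmod (x i))\<^sup>2)"
  by (simp add: cinner_self)
lemma cinner_self_Im[simp]: "Im (cinner x x) = 0"
  by (simp add: cinner_self)
lemma cinner_self_Re_ge: "Re (cinner x x) \<ge> 0"
  by (simp add: cinner_self_Re sum_nonneg)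
lemma cinner_self_real: "cinner x x = of_real (Re (cinner x x))"
  by (simp add: cinner_self)
lemma cinner_self_Re_eq0: "Re (cinner x x) = 0 \<longleftrightarrow> x = 0"
proof
  assume "Re (cinner x x) = 0"
  then have "\<forall>i\<in>UNIV. (cmod (x i))\<^sup>2 = 0" unfolding cinner_self_Re
    by (subst (asm) sum_nonneg_eq_0_iff) auto
  then show "x = 0" by auto
qed simp
lemma cinner_self_eq0: "cinner x x = 0 \<longleftrightarrow> x = 0"
  by (metis cinner_self_Re_eq0 cinner_self_real of_real_0 zero_complex.sel(1))

lemma mv_add: "mv A (x + y) = mv A x + mv A y"
  by (simp add: mv_def distrib_left sum.distrib fun_eq_iff)
lemma mv_diff: "mv A (x - y) = mv A x - mv A y"
  by (simp add: mv_def right_diff_distrib sum_subtractf fun_eq_iff)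
lemma mv_scl: "mv A (scl c x) = scl c (mv A x)"
  by (simp add: mv_def scl_def sum_distrib_left algebra_simps fun_eq_iff)
lemma mv_mdiff: "mv (A - B) x = mv A x - mv B x"
  by (simp add: mv_def left_diff_distrib sum_subtractf fun_eq_iff)
lemma mv_madd: "mv (A + B) x = mv A x + mv B x"
  by (simp add: mv_def distrib_right sum.distrib fun_eq_iff)
lemma mv_zero[simp]: "mv A 0 = 0" by (simp add: mv_def fun_eq_iff)

lemma cinner_mv_adj: "cinner x (mv A y) = cinner (mv (adj A) x) y"
proof -
  have "cinner x (mv A y) = (\<Sum>i\<in>UNIV. \<Sum>j\<in>UNIV. cnj (x i) * A i j * y j)"
    by (simp add: cinner_def mv_def sum_distrib_left mult.assoc)
  also have "\<dots> = (\<Sum>j\<in>UNIV. \<Sum>i\<in>UNIV. cnj (x i) * A i j * y j)" by (rule sum.swap)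
  also have "\<dots> = cinner (mv (adj A) x) y"
    by (simp add: cinner_def mv_def adj_def sum_distrib_right sum_distrib_left mult_ac)
  finally show ?thesis .
qed

lemma mv_opmult: "mv (opmult A B) x = mv A (mv B x)"
proof
  fix i
  have "mv (opmult A B) x i = (\<Sum>k\<in>UNIV. \<Sum>j\<in>UNIV. A i j * B j k * x k)"
    by (simp add: opmult_def mv_def sum_distrib_right)
  also have "\<dots> = (\<Sum>j\<in>UNIV. \<Sum>k\<in>UNIV. A i j * B j k * x k)" by (rule sum.swap)
  also have "\<dots> = mv A (mv B x) i"
    by (simp add: mv_def sum_distrib_left mult_ac)
  finally show "mv (opmult A B) x i = mv A (mv B x) i" .
qed

lemma qf_eq: "(\<Sum>i\<in>UNIV. \<Sum>j\<in>UNIV. cnj (x i) * A i j * x j) = cinner x (mv A x)"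
  unfolding cinner_def mv_def by (simp add: sum_distrib_left mult.assoc)

lemma psd_iff: "psd A \<longleftrightarrow> (\<forall>x. Im (cinner x (mv A x)) = 0 \<and> Re (cinner x (mv A x)) \<ge> 0)"
  unfolding psd_def qf_eq ..


definition ev :: "'n \<Rightarrow> ('n \<Rightarrow> complex)" where
  "ev i = (\<lambda>j. if j = i then 1 else 0)"

lemma cinner_ev_left[simp]: "cinner (ev i) x = x i"
proof -
  have "(\<lambda>j. cnj (ev i j) * x j) = (\<lambda>j. if j = i then x i else 0)" by (auto simp: ev_def fun_eq_iff)
  note h = this
  show ?thesis unfolding cinner_def h by simp
qed
lemma cinner_ev_right[simp]: "cinner x (ev i) = cnj (x i)"
proof -
  have "(\<lambda>j. cnj (x j) * ev i j) = (\<lambda>j. if j = i then cnj (x i) else 0)" by (auto simp: ev_def fun_eq_iff)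
  note h = this
  show ?thesis unfolding cinner_def h by simp
qed
lemma mv_ev[simp]: "mv A (ev j) = (\<lambda>i. A i j)"
proof
  fix i
  have "(\<lambda>k. A i k * ev j k) = (\<lambda>k. if k = j then A i j else 0)" by (auto simp: ev_def fun_eq_iff)
  note h = this
  show "mv A (ev j) i = A i j" unfolding mv_def h by simp
qed

lemma herm_form: "adj A = A \<Longrightarrow> cinner x (mv A y) = cnj (cinner y (mv A x))"
  by (metis cinner_commute cinner_mv_adj)

lemma herm_of_forms:
  assumes "\<And>x y. cinner x (mv A y) = cnj (cinner y (mv A x))"
  shows "adj A = A"
proof -
  have "adj A i j = A i j" for i j
    using assms[of "ev i" "ev j"] by (simp add: adj_def)
  then show ?thesis by (auto simp: fun_eq_iff)
qed

lemma scl_ii_form: "cinner (scl c x) (mv A (scl c x)) = (cnj c * c) * cinner x (mv A x)"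
  by (simp add: mv_scl cinner_scl_left cinner_scl_right)

lemma psd_herm:
  assumes "psd A" shows "adj A = A"
proof (rule herm_of_forms)
  fix x y
  let ?q = "\<lambda>z. cinner z (mv A z)"
  have im: "Im (?q z) = 0" for z using assms by (simp add: psd_iff)
  define a where "a = cinner x (mv A y)"
  define b where "b = cinner y (mv A x)"
  have 1: "?q (x + y) = ?q x + ?q y + a + b"
    by (simp add: a_def b_def mv_add cinner_add_left cinner_add_right)
  have "?q (x + scl \<i> y) = ?q x + ?q (scl \<i> y) + \<i> * a - \<i> * b"
    by (simp add: a_def b_def mv_add mv_scl cinner_add_left cinner_add_right cinner_scl_left cinner_scl_right algebra_simps)
  also have "?q (scl \<i> y) = ?q y" by (simp only: scl_ii_form) simp
  finally have 2: "?q (x + scl \<i> y) = ?q x + ?q y + \<i> * a - \<i> * b" .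
  from 1 im[of "x+y"] im[of x] im[of y] have "Im a + Im b = 0" by simp
  moreover from 2 im[of "x+scl \<i> y"] im[of x] im[of y] have "Re a - Re b = 0" by simp
  ultimately show "a = cnj b" by (simp add: complex_eq_iff)
qed

lemma real_quad_zero:
  fixes c d :: real
  assumes "\<And>t. 0 \<le> 2 * t * c + t\<^sup>2 * d"
  shows "c = 0"
proof (rule ccontr)
  assume c: "c \<noteq> 0"
  define e where "e = 1 / (\<bar>d\<bar> + 1)"
  have e0: "e > 0" by (simp add: e_def)
  have ed: "e * d < 1"
  proof -
    have "e * d \<le> e * \<bar>d\<bar>" using e0 by (simp add: mult_left_mono)
    also have "e * \<bar>d\<bar> < 1" by (simp add: e_def)
    finally show ?thesis .
  qed
  have eq: "2 * (- c * e) * c + (- c * e)\<^sup>2 * d = (c\<^sup>2 * e) * (e * d - 2)"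
    by (simp add: power2_eq_square algebra_simps)
  have "(c\<^sup>2 * e) * (e * d - 2) < 0"
    by (rule mult_pos_neg) (use c e0 ed in auto)
  then show False using assms[of "- c * e"] eq by simp
qed

lemma quad_lemma:
  assumes herm: "adj E = E"
    and S: "\<And>w u c. w \<in> S \<Longrightarrow> u \<in> S \<Longrightarrow> w + scl c u \<in> S"
    and nonneg: "\<And>w. w \<in> S \<Longrightarrow> Re (cinner w (mv E w)) \<ge> 0"
    and v: "v \<in> S" and v0: "Re (cinner v (mv E v)) = 0" and u: "u \<in> S"
  shows "Re (cinner u (mv E v)) = 0"
proof (rule real_quad_zero)
  fix t :: real
  let ?c = "Re (cinner u (mv E v))"
  have h: "Re (cinner v (mv E u)) = ?c" using herm_form[OF herm, of v u] by simp
  have "Re (cinner (v + scl (of_real t) u) (mv E (v + scl (of_real t) u)))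
      = Re (cinner v (mv E v)) + t * Re (cinner v (mv E u)) + t * ?c + t\<^sup>2 * Re (cinner u (mv E u))"
    by (simp add: mv_add mv_scl cinner_add_left cinner_add_right cinner_scl_left cinner_scl_right
        power2_eq_square algebra_simps)
  also have "\<dots> = 2 * t * ?c + t\<^sup>2 * Re (cinner u (mv E u))" using h v0 by simp
  finally show "0 \<le> 2 * t * ?c + t\<^sup>2 * Re (cinner u (mv E u))"
    using nonneg[OF S[OF v u, of "of_real t"]] by simp
qed

lemma psd_zero_form:
  assumes "psd B" "Re (cinner v (mv B v)) = 0"
  shows "mv B v = 0"
proof -
  have "Re (cinner (mv B v) (mv B v)) = 0"
    by (rule quad_lemma[where S=UNIV]) (use assms psd_herm in \<open>auto simp: psd_iff\<close>)
  then show ?thesis by (simp add: cinner_self_Re_eq0)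
qed


definition orthon :: "(nat \<Rightarrow> 'n::finite \<Rightarrow> complex) \<Rightarrow> nat \<Rightarrow> bool" where
  "orthon f m \<longleftrightarrow> (\<forall>k<m. \<forall>l<m. cinner (f k) (f l) = (if k = l then 1 else 0))"

definition eigen :: "('n::finite) op \<Rightarrow> (nat \<Rightarrow> 'n \<Rightarrow> complex) \<Rightarrow> (nat \<Rightarrow> real) \<Rightarrow> nat \<Rightarrow> bool" where
  "eigen D f lam m \<longleftrightarrow> (\<forall>k<m. mv D (f k) = scl (of_real (lam k)) (f k))"

definition resid :: "(nat \<Rightarrow> 'n::finite \<Rightarrow> complex) \<Rightarrow> nat \<Rightarrow> 'n \<Rightarrow> ('n \<Rightarrow> complex)" where
  "resid f m i = ev i - (\<lambda>j. \<Sum>k<m. cnj (f k i) * f k j)"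

lemma cinner_sum_right: "cinner x (\<lambda>j. \<Sum>k\<in>K. c k * y k j) = (\<Sum>k\<in>K. c k * cinner x (y k))"
proof -
  have "cinner x (\<lambda>j. \<Sum>k\<in>K. c k * y k j) = (\<Sum>j\<in>UNIV. \<Sum>k\<in>K. c k * (cnj (x j) * y k j))"
    by (simp add: cinner_def sum_distrib_left mult_ac)
  also have "\<dots> = (\<Sum>k\<in>K. \<Sum>j\<in>UNIV. c k * (cnj (x j) * y k j))" by (rule sum.swap)
  also have "\<dots> = (\<Sum>k\<in>K. c k * cinner x (y k))" by (simp add: cinner_def sum_distrib_left)
  finally show ?thesis .
qed

lemma cnj_mult_self: "cnj z * z = of_real ((cmod z)\<^sup>2)"
  by (simp only: complex_norm_square mult.commute)

lemma resid_perp: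
  assumes "orthon f m" "l < m"
  shows "cinner (f l) (resid f m i) = 0"
proof -
  have "(\<Sum>k<m. cnj (f k i) * cinner (f l) (f k)) = (\<Sum>k<m. if k = l then cnj (f l i) else 0)"
    by (rule sum.cong) (use assms in \<open>auto simp: orthon_def\<close>)
  also have "\<dots> = cnj (f l i)" using assms(2) by simp
  finally show ?thesis
    unfolding resid_def cinner_diff_right cinner_sum_right by simp
qed

lemma resid_self:
  assumes "orthon f m"
  shows "cinner (resid f m i) (resid f m i) = 1 - of_real (\<Sum>k<m. (cmod (f k i))\<^sup>2)"
proof -
  let ?r = "resid f m i"
  have z: "cinner ?r (f k) = 0" if "k < m" for k
    using resid_perp[OF assms that, of i] cinner_commute[of ?r "f k"] by simp
  have "cinner ?r ?r = cinner ?r (ev i) - (\<Sum>k<m. cnj (f k i) * cinner ?r (f k))"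
    by (subst (2) resid_def) (simp only: cinner_diff_right cinner_sum_right)
  also have "(\<Sum>k<m. cnj (f k i) * cinner ?r (f k)) = 0" using z by simp
  also have "cinner ?r (ev i) = cnj (?r i)" by simp
  also have "?r i = 1 - of_real (\<Sum>k<m. (cmod (f k i))\<^sup>2)"
    by (simp add: resid_def ev_def cnj_mult_self)
  finally show ?thesis by simp
qed

lemma resid_sum:
  fixes f :: "nat \<Rightarrow> 'n::finite \<Rightarrow> complex"
  assumes "orthon f m"
  shows "(\<Sum>i\<in>UNIV. Re (cinner (resid f m i) (resid f m i))) = real CARD('n::finite) - real m"
proof -
  have "(\<Sum>i\<in>UNIV. Re (cinner (resid f m i) (resid f m i)))
      = (\<Sum>i\<in>(UNIV::'n set). 1 - (\<Sum>k<m. (cmod (f k i))\<^sup>2))"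
    using resid_self[OF assms] by simp
  also have "\<dots> = real CARD('n) - (\<Sum>i\<in>(UNIV::'n set). \<Sum>k<m. (cmod (f k i))\<^sup>2)"
    by (simp add: sum_subtractf)
  also have "(\<Sum>i\<in>(UNIV::'n set). \<Sum>k<m. (cmod (f k i))\<^sup>2) = (\<Sum>k<m. \<Sum>i\<in>UNIV. (cmod (f k i))\<^sup>2)"
    by (rule sum.swap)
  also have "\<dots> = (\<Sum>k<m. 1)"
  proof (rule sum.cong)
    fix k assume "k \<in> {..<m}"
    then have "cinner (f k) (f k) = 1" using assms by (simp add: orthon_def)
    then show "(\<Sum>i\<in>UNIV. (cmod (f k i))\<^sup>2) = 1"
      using cinner_self_Re[of "f k"] by simp
  qed simp
  finally show ?thesis by simp
qed

lemma exists_perp: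
  fixes f :: "nat \<Rightarrow> 'n::finite \<Rightarrow> complex"
  assumes "orthon f m" "m < CARD('n::finite)"
  shows "\<exists>w::'n \<Rightarrow> complex. w \<noteq> 0 \<and> (\<forall>k<m. cinner (f k) w = 0)"
proof (rule ccontr)
  assume "\<not> ?thesis"
  then have "\<forall>i. resid f m i = (0::'n \<Rightarrow> complex)" using resid_perp[OF assms(1)] by blast
  then have "(\<Sum>i\<in>(UNIV::'n set). Re (cinner (resid f m i) (resid f m i))) = 0" by simp
  with resid_sum[OF assms(1)] assms(2) show False by simp
qed

lemma orthon_complete:
  fixes f :: "nat \<Rightarrow> 'n::finite \<Rightarrow> complex"
  assumes "orthon f CARD('n::finite)"
  shows "(\<Sum>k<CARD('n). f k i * cnj (f k j)) = (if i = j then 1 else (0::complex))"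
proof -
  have "(\<Sum>i\<in>(UNIV::'n set). Re (cinner (resid f CARD('n) i) (resid f CARD('n) i))) = 0"
    using resid_sum[OF assms] by simp
  then have "\<forall>i\<in>(UNIV::'n set). Re (cinner (resid f CARD('n) i) (resid f CARD('n) i)) = 0"
    by (subst (asm) sum_nonneg_eq_0_iff) (auto simp: cinner_self_Re_ge)
  then have "resid f CARD('n) i = 0" by (simp add: cinner_self_Re_eq0)
  then have "resid f CARD('n) i j = 0" by simp
  then have "(\<Sum>k<CARD('n). cnj (f k i) * f k j) = (if j = i then 1 else 0)"
    by (simp add: resid_def ev_def)
  then have "cnj (\<Sum>k<CARD('n). cnj (f k i) * f k j) = (if i = j then 1 else 0)"
    by (auto split: if_splits)
  then show ?thesis by (simp add: mult.commute)
qed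

lemma sum_if_delta_left:
  fixes u :: "'n::finite \<Rightarrow> complex"
  shows "(\<Sum>j\<in>UNIV. (if i = j then c else 0) * u j) = c * u i"
proof -
  have h: "(\<lambda>j. (if i = j then c else 0) * u j) = (\<lambda>j. if j = i then c * u i else 0)"
    by auto
  show ?thesis unfolding h by simp
qed

lemma norm_vec_sq: "Re (cinner (vec_nth x) (vec_nth x)) = (norm (x::complex^'n::finite))\<^sup>2"
  by (simp add: cinner_self_Re norm_vec_def L2_set_def sum_nonneg)

lemma cinner_self_real_eq1: "Re (cinner x x) = 1 \<Longrightarrow> cinner x x = 1"
  using cinner_self_real[of x] by simp

lemma eigen_perp:
  fixes D :: "('n::finite) op"
  assumes herm: "adj D = D" and orth: "orthon f m" and eig: "eigen D f lam m"
    and w: "w \<noteq> 0" "\<forall>k<m. cinner (f k) w = 0"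
  shows "\<exists>v l. cinner v v = 1 \<and> (\<forall>k<m. cinner (f k) v = 0) \<and> mv D v = scl (of_real l) v"
proof -
  define S where "S = {u::'n \<Rightarrow> complex. \<forall>k<m. cinner (f k) u = 0}"
  define T where "T = {x :: complex^'n. norm x = 1 \<and> (\<forall>k<m. cinner (f k) (vec_nth x) = 0)}"
  define \<phi> where "\<phi> = (\<lambda>x::complex^'n. Re (cinner (vec_nth x) (mv D (vec_nth x))))"
  have Scl: "a + scl c b \<in> S" if "a \<in> S" "b \<in> S" for a b c
    using that by (simp add: S_def cinner_add_right cinner_scl_right)
  have normalize: "vec_lambda (scl (of_real (1 / sqrt (Re (cinner u u)))) u) \<in> T \<and>
      Re (cinner u (mv D u)) = Re (cinner u u) * \<phi> (vec_lambda (scl (of_real (1 / sqrt (Re (cinner u u)))) u))"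
    if "u \<in> S" "u \<noteq> 0" for u
  proof -
    define s where "s = sqrt (Re (cinner u u))"
    have s0: "s > 0" using that cinner_self_Re_ge[of u] cinner_self_Re_eq0[of u] by (simp add: s_def)
    have ss: "s * s = Re (cinner u u)" using cinner_self_Re_ge[of u] by (simp add: s_def)
    define u' where "u' = scl (of_real (1 / s)) u"
    have vn: "vec_nth (vec_lambda u') = u'" by (simp add: fun_eq_iff)
    have pos: "Re (cinner u u) > 0" using s0 ss by (metis mult_pos_pos)
    have "Re (cinner u' u') = 1"
      using s0 ss pos by (simp add: u'_def cinner_scl_left cinner_scl_right)
    then have "(norm (vec_lambda u'))\<^sup>2 = 1" using norm_vec_sq[of "vec_lambda u'"] vn by simp
    then have "norm (vec_lambda u') = 1"
      using norm_ge_zero[of "vec_lambda u'"] power2_eq_1_iff[of "norm (vec_lambda u')"] by linarith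
    moreover have "\<forall>k<m. cinner (f k) u' = 0" using that by (simp add: S_def u'_def cinner_scl_right)
    moreover have "Re (cinner u (mv D u)) = Re (cinner u u) * Re (cinner u' (mv D u'))"
      using s0 ss pos by (simp add: u'_def scl_ii_form) 
    ultimately show ?thesis unfolding T_def \<phi>_def u'_def[symmetric] s_def[symmetric] by (simp add: vn)
  qed
  have "compact T"
  proof -
    have "T = sphere 0 1 \<inter> (\<Inter>k\<in>{..<m}. {x::complex^'n. cinner (f k) (vec_nth x) = 0})"
      by (auto simp: T_def)
    moreover have "closed (\<Inter>k\<in>{..<m}. {x::complex^'n. cinner (f k) (vec_nth x) = 0})"
      unfolding cinner_def by (intro closed_INT ballI closed_Collect_eq continuous_intros)
    ultimately show ?thesis by (simp add: compact_Int_closed)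
  qed
  moreover have "T \<noteq> {}" using normalize[of w] w by (auto simp: S_def)
  moreover have "continuous_on T \<phi>" unfolding \<phi>_def cinner_def mv_def by (intro continuous_intros)
  ultimately obtain x0 where x0: "x0 \<in> T" "\<forall>y\<in>T. \<phi> y \<le> \<phi> x0"
    using continuous_attains_sup by blast
  define v where "v = vec_nth x0"
  define l where "l = \<phi> x0"
  have vS: "v \<in> S" using x0 by (simp add: T_def S_def v_def)
  have vv: "cinner v v = 1"
    using x0 norm_vec_sq[of x0] by (intro cinner_self_real_eq1) (simp add: T_def v_def)
  have bound: "Re (cinner u (mv D u)) \<le> l * Re (cinner u u)" if "u \<in> S" for u
  proof (cases "u = 0")
    case True then show ?thesis by simp
  next
    case False
    from normalize[OF that False] x0(2)
    show ?thesis unfolding l_def using cinner_self_Re_ge[of u]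
      by (metis mult.commute mult_left_mono)
  qed
  define E where "E = (\<lambda>i j. (if i = j then complex_of_real l else 0) - D i j)"
  have mvE: "mv E u = scl (of_real l) u - mv D u" for u
    by (simp add: E_def mv_def scl_def fun_eq_iff left_diff_distrib sum_subtractf sum_if_delta_left)
  have Dsym: "cnj (D j i) = D i j" for i j using fun_cong[OF fun_cong[OF herm, of i], of j]
    by (simp add: adj_def)
  have hermE: "adj E = E" by (auto simp: adj_def E_def fun_eq_iff Dsym)
  have qE: "Re (cinner u (mv E u)) = l * Re (cinner u u) - Re (cinner u (mv D u))" for u
    by (simp add: mvE cinner_diff_right cinner_scl_right)
  have nonneg: "Re (cinner u (mv E u)) \<ge> 0" if "u \<in> S" for u using bound[OF that] qE[of u] by simp
  have qEv: "Re (cinner v (mv E v)) = 0" using qE[of v] vv by (simp add: l_def \<phi>_def v_def)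
  have perp: "cinner u (mv E v) = 0" if "u \<in> S" for u
  proof -
    have iuS: "scl \<i> u \<in> S" using Scl[of 0 u \<i>] that by (simp add: S_def)
    have "Re (cinner u (mv E v)) = 0"
      by (rule quad_lemma[OF hermE Scl nonneg vS qEv that])
    moreover have "Re (cinner (scl \<i> u) (mv E v)) = 0"
      by (rule quad_lemma[OF hermE Scl nonneg vS qEv iuS])
    then have "Im (cinner u (mv E v)) = 0" by (simp add: cinner_scl_left)
    ultimately show ?thesis by (simp add: complex_eq_iff)
  qed
  have EvS: "mv E v \<in> S"
    unfolding S_def
  proof (intro allI impI CollectI)
    fix k assume k: "k < m"
    have "cinner (f k) (mv D v) = cinner (mv D (f k)) v" using cinner_mv_adj[of "f k" D v] herm by simp
    also have "\<dots> = 0" using eig k vS by (simp add: eigen_def S_def cinner_scl_left)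
    finally show "cinner (f k) (mv E v) = 0" using vS k
      by (simp add: mvE cinner_diff_right cinner_scl_right S_def)
  qed
  have "mv E v = 0" using perp[OF EvS] by (simp add: cinner_self_eq0)
  then have "mv D v = scl (of_real l) v" by (simp add: mvE)
  then show ?thesis using vv vS by (auto simp: S_def)
qed


lemma eig_family:
  fixes D :: "('n::finite) op"
  assumes herm: "adj D = D"
  shows "m \<le> CARD('n) \<Longrightarrow> \<exists>(f::nat \<Rightarrow> 'n \<Rightarrow> complex) lam. orthon f m \<and> eigen D f lam m"
proof (induction m)
  case 0
  show ?case by (auto simp: orthon_def eigen_def)
next
  case (Suc m)
  then obtain f lam where f: "orthon f m" "eigen D f lam m" by auto
  from Suc.prems have "m < CARD('n)" by simp
  from exists_perp[OF f(1) this] obtain w where w: "w \<noteq> 0" "\<forall>k<m. cinner (f k) w = 0" by blast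
  from eigen_perp[OF herm f w] obtain v l where
    v: "cinner v v = 1" "\<forall>k<m. cinner (f k) v = 0" "mv D v = scl (of_real l) v" by blast
  have v': "cinner v (f k) = 0" if "k < m" for k
    using v(2) that cinner_commute[of v "f k"] by simp
  have "orthon (f(m := v)) (Suc m)"
    unfolding orthon_def
  proof (intro allI impI)
    fix k l assume "k < Suc m" "l < Suc m"
    then show "cinner ((f(m := v)) k) ((f(m := v)) l) = (if k = l then 1 else 0)"
      using f(1) v v' by (auto simp: orthon_def less_Suc_eq)
  qed
  moreover have "eigen D (f(m := v)) (lam(m := l)) (Suc m)"
    using f(2) v by (auto simp: eigen_def less_Suc_eq)
  ultimately show ?case by blast
qed

definition spec :: "(nat \<Rightarrow> 'n::finite \<Rightarrow> complex) \<Rightarrow> (nat \<Rightarrow> complex) \<Rightarrow> 'n op" where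
  "spec f c = (\<lambda>i j. \<Sum>k<CARD('n). c k * f k i * cnj (f k j))"

lemma sum_delta_mult_right:
  fixes g :: "'n::finite \<Rightarrow> complex"
  shows "(\<Sum>l\<in>UNIV. g l * (if l = j then 1 else 0)) = g j"
proof -
  have h: "(\<lambda>l. g l * (if l = j then 1 else 0)) = (\<lambda>l. if l = j then g j else 0)" by auto
  show ?thesis unfolding h by simp
qed

lemma spectral:
  fixes D :: "('n::finite) op"
  assumes herm: "adj D = D"
  shows "\<exists>f lam. orthon f CARD('n) \<and> eigen D f lam CARD('n) \<and> D = spec f (\<lambda>k. of_real (lam k))"
proof -
  obtain f lam where f: "orthon f CARD('n)" "eigen D f lam CARD('n)"
    using eig_family[OF herm, of "CARD('n)"] by auto
  have "D i j = spec f (\<lambda>k. of_real (lam k)) i j" for i j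
  proof -
    have "D i j = (\<Sum>l\<in>UNIV. D i l * (\<Sum>k<CARD('n). f k l * cnj (f k j)))"
      by (simp add: orthon_complete[OF f(1)] sum_delta_mult_right)
    also have "\<dots> = (\<Sum>l\<in>UNIV. \<Sum>k<CARD('n). D i l * f k l * cnj (f k j))"
      by (simp add: sum_distrib_left mult.assoc)
    also have "\<dots> = (\<Sum>k<CARD('n). \<Sum>l\<in>UNIV. D i l * f k l * cnj (f k j))" by (rule sum.swap)
    also have "\<dots> = (\<Sum>k<CARD('n). mv D (f k) i * cnj (f k j))"
      by (simp add: mv_def sum_distrib_right)
    also have "\<dots> = spec f (\<lambda>k. of_real (lam k)) i j"
      unfolding spec_def using f(2) by (intro sum.cong) (auto simp: eigen_def scl_def)
    finally show ?thesis .
  qed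
  then show ?thesis using f by (auto simp: fun_eq_iff)
qed

lemma mv_spec: "mv (spec f c) x = (\<lambda>i. \<Sum>k<CARD('n). (c k * cinner (f k) x) * f k i)"
  for f :: "nat \<Rightarrow> 'n::finite \<Rightarrow> complex"
proof
  fix i
  have "mv (spec f c) x i = (\<Sum>j\<in>UNIV. \<Sum>k<CARD('n). c k * f k i * (cnj (f k j) * x j))"
    by (simp add: mv_def spec_def sum_distrib_right mult.assoc)
  also have "\<dots> = (\<Sum>k<CARD('n). \<Sum>j\<in>UNIV. c k * f k i * (cnj (f k j) * x j))" by (rule sum.swap)
  also have "\<dots> = (\<Sum>k<CARD('n). (c k * cinner (f k) x) * f k i)"
    by (simp add: cinner_def sum_distrib_left mult_ac)
  finally show "mv (spec f c) x i = (\<Sum>k<CARD('n). (c k * cinner (f k) x) * f k i)" .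
qed

lemma cinner_spec:
  fixes f :: "nat \<Rightarrow> 'n::finite \<Rightarrow> complex"
  assumes "orthon f CARD('n)" "l < CARD('n)"
  shows "cinner (f l) (mv (spec f c) x) = c l * cinner (f l) x"
proof -
  have "cinner (f l) (mv (spec f c) x) = (\<Sum>k<CARD('n). (c k * cinner (f k) x) * cinner (f l) (f k))"
    unfolding mv_spec cinner_sum_right ..
  also have "\<dots> = (\<Sum>k<CARD('n). if k = l then c l * cinner (f l) x else 0)"
    by (rule sum.cong) (use assms in \<open>auto simp: orthon_def\<close>)
  also have "\<dots> = c l * cinner (f l) x" using assms(2) by simp
  finally show ?thesis .
qed

lemma mv_ext: "(\<And>x. mv A x = mv B x) \<Longrightarrow> A = B"
  for A B :: "('n::finite) op"
proof -
  assume h: "\<And>x. mv A x = mv B x"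
  have "A i j = B i j" for i j using fun_cong[OF h[of "ev j"], of i] by simp
  then show "A = B" by (auto simp: fun_eq_iff)
qed

lemma spec_mult:
  fixes f :: "nat \<Rightarrow> 'n::finite \<Rightarrow> complex"
  assumes "orthon f CARD('n)"
  shows "opmult (spec f c) (spec f d) = spec f (\<lambda>k. c k * d k)"
proof (rule mv_ext)
  fix x
  have "mv (spec f c) (mv (spec f d) x) = (\<lambda>i. \<Sum>k<CARD('n). (c k * cinner (f k) (mv (spec f d) x)) * f k i)"
    by (rule mv_spec)
  also have "\<dots> = (\<lambda>i. \<Sum>k<CARD('n). ((c k * d k) * cinner (f k) x) * f k i)"
    by (intro ext sum.cong) (simp_all add: cinner_spec[OF assms] mult.assoc)
  also have "\<dots> = mv (spec f (\<lambda>k. c k * d k)) x" by (rule mv_spec[symmetric])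
  finally have "mv (spec f c) (mv (spec f d) x) = mv (spec f (\<lambda>k. c k * d k)) x" .
  then show "mv (opmult (spec f c) (spec f d)) x = mv (spec f (\<lambda>k. c k * d k)) x"
    by (simp add: mv_opmult)
qed

lemma spec_cong: "(\<And>k. k < CARD('n) \<Longrightarrow> c k = d k) \<Longrightarrow> spec (f :: nat \<Rightarrow> 'n::finite \<Rightarrow> complex) c = spec f d"
  unfolding spec_def by (intro ext sum.cong) auto

lemma spec_psd:
  fixes f :: "nat \<Rightarrow> 'n::finite \<Rightarrow> complex"
  assumes "\<And>k. k < CARD('n) \<Longrightarrow> r k \<ge> 0"
  shows "psd (spec f (\<lambda>k. of_real (r k)))"
  unfolding psd_iff
proof
  fix x
  have "cinner x (mv (spec f (\<lambda>k. of_real (r k))) x)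
      = (\<Sum>k<CARD('n). (of_real (r k) * cinner (f k) x) * cinner x (f k))"
    unfolding mv_spec cinner_sum_right ..
  also have "\<dots> = of_real (\<Sum>k<CARD('n). r k * (cmod (cinner (f k) x))\<^sup>2)"
    unfolding of_real_sum
  proof (rule sum.cong)
    fix k
    have "cinner x (f k) = cnj (cinner (f k) x)" by (rule cinner_commute)
    then show "(of_real (r k) * cinner (f k) x) * cinner x (f k) = of_real (r k * (cmod (cinner (f k) x))\<^sup>2)"
      by (simp only: of_real_mult complex_norm_square mult.assoc)
  qed simp
  finally have E: "cinner x (mv (spec f (\<lambda>k. of_real (r k))) x) = of_real (\<Sum>k<CARD('n). r k * (cmod (cinner (f k) x))\<^sup>2)" .
  have nn: "0 \<le> (\<Sum>k<CARD('n). r k * (cmod (cinner (f k) x))\<^sup>2)"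
    by (rule sum_nonneg) (simp add: assms)
  show "Im (cinner x (mv (spec f (\<lambda>k. of_real (r k))) x)) = 0 \<and>
      0 \<le> Re (cinner x (mv (spec f (\<lambda>k. of_real (r k))) x))"
    unfolding E using nn by (simp only: Im_complex_of_real Re_complex_of_real simp_thms)
qed

lemma adj_opmult: "adj (opmult A B) = opmult (adj B) (adj A)"
  by (simp add: adj_def opmult_def fun_eq_iff mult.commute)

lemma adj_adj[simp]: "adj (adj A) = A"
  by (simp add: adj_def)

lemma sqrt_exists:
  fixes A :: "('n::finite) op"
  shows "\<exists>B. psd B \<and> opmult B B = opmult (adj A) A"
proof -
  define P where "P = opmult (adj A) A"
  have "adj P = P" by (simp add: P_def adj_opmult)
  from spectral[OF this] obtain f lam where
    f: "orthon f CARD('n)" "eigen P f lam CARD('n)" "P = spec f (\<lambda>k. of_real (lam k))" by blast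
  have lam: "lam k \<ge> 0" if "k < CARD('n)" for k
  proof -
    have "cinner (f k) (mv P (f k)) = of_real (lam k)"
      using f(1,2) that by (simp add: eigen_def cinner_scl_right orthon_def)
    moreover have "cinner (f k) (mv P (f k)) = cinner (mv A (f k)) (mv A (f k))"
      by (simp add: P_def mv_opmult cinner_mv_adj)
    ultimately have e: "complex_of_real (lam k) = cinner (mv A (f k)) (mv A (f k))" by simp
    have "lam k = Re (cinner (mv A (f k)) (mv A (f k)))" using arg_cong[where f=Re, OF e] by simp
    then show ?thesis using cinner_self_Re_ge[of "mv A (f k)"] by simp
  qed
  define B where "B = spec f (\<lambda>k. of_real (sqrt (lam k)))"
  have "psd B" unfolding B_def by (rule spec_psd) (simp add: lam)
  moreover have "opmult B B = P"
    unfolding B_def spec_mult[OF f(1)] f(3)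
    by (rule spec_cong) (simp add: lam flip: of_real_mult)
  ultimately show ?thesis by (auto simp: P_def)
qed

lemma mv_mdiff': "mv (\<lambda>i j. A i j - B i j) x = mv A x - mv B x"
  by (simp add: mv_def left_diff_distrib sum_subtractf fun_eq_iff)

lemma sqrt_unique:
  fixes B1 B2 :: "('n::finite) op"
  assumes p1: "psd B1" and p2: "psd B2" and eq: "opmult B1 B1 = opmult B2 B2"
  shows "B1 = B2"
proof -
  define D where "D = (\<lambda>i j. B1 i j - B2 i j)"
  have h1: "adj B1 = B1" "adj B2 = B2" using psd_herm p1 p2 by auto
  have c1: "cnj (B1 j i) = B1 i j" for i j using fun_cong[OF fun_cong[OF h1(1), of i], of j] by (simp add: adj_def)
  have c2: "cnj (B2 j i) = B2 i j" for i j using fun_cong[OF fun_cong[OF h1(2), of i], of j] by (simp add: adj_def)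
  have herm: "adj D = D" by (simp add: D_def adj_def fun_eq_iff c1 c2)
  from spectral[OF herm] obtain f mu where
    f: "orthon f CARD('n)" "eigen D f mu CARD('n)" "D = spec f (\<lambda>k. of_real (mu k))" by blast
  have mvD: "mv D w = mv B1 w - mv B2 w" for w by (simp add: D_def mv_mdiff')
  have mu0: "mu k = 0" if k: "k < CARD('n)" for k
  proof (rule ccontr)
    assume nz: "mu k \<noteq> 0"
    define v where "v = f k"
    define c where "c = complex_of_real (mu k)"
    have Dv: "mv D v = scl c v" using f(2) k by (simp add: eigen_def v_def c_def)
    have vv: "cinner v v = 1" using f(1) k by (simp add: orthon_def v_def)
    have "mv B1 (mv D v) + mv D (mv B2 v) = (mv B1 (mv B1 v) - mv B1 (mv B2 v)) + (mv B1 (mv B2 v) - mv B2 (mv B2 v))"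
      by (simp add: mvD mv_diff)
    also have "\<dots> = mv (opmult B1 B1) v - mv (opmult B2 B2) v" by (simp add: mv_opmult)
    also have "\<dots> = 0" by (simp add: eq)
    finally have key: "mv B1 (mv D v) + mv D (mv B2 v) = 0" .
    have t1: "cinner v (mv B1 (mv D v)) = c * cinner v (mv B1 v)"
      by (simp add: Dv mv_scl cinner_scl_right)
    have t2: "cinner v (mv D (mv B2 v)) = c * cinner v (mv B2 v)"
    proof -
      have "cinner v (mv D (mv B2 v)) = cinner (mv D v) (mv B2 v)"
        using cinner_mv_adj[of v D "mv B2 v"] herm by simp
      also have "\<dots> = c * cinner v (mv B2 v)" by (simp add: Dv cinner_scl_left c_def)
      finally show ?thesis .
    qed
    have "c * (cinner v (mv B1 v) + cinner v (mv B2 v)) = 0"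
      using arg_cong[OF key, of "cinner v"] t1 t2 by (simp add: cinner_add_right distrib_left)
    moreover have "c \<noteq> 0" using nz by (simp add: c_def)
    ultimately have "cinner v (mv B1 v) + cinner v (mv B2 v) = 0" by simp
    then have "Re (cinner v (mv B1 v) + cinner v (mv B2 v)) = 0" by (simp only: zero_complex.sel)
    then have "Re (cinner v (mv B1 v)) + Re (cinner v (mv B2 v)) = 0" by (simp only: plus_complex.sel)
    moreover have "Re (cinner v (mv B1 v)) \<ge> 0" "Re (cinner v (mv B2 v)) \<ge> 0"
      using p1 p2 by (auto simp: psd_iff)
    ultimately have "Re (cinner v (mv B1 v)) = 0" "Re (cinner v (mv B2 v)) = 0" by auto
    then have "mv B1 v = 0" "mv B2 v = 0" using psd_zero_form p1 p2 by auto
    then have "scl c v = 0" using Dv mvD by simp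
    then have "cinner v (scl c v) = 0" by simp
    then have "c = 0" using vv by (simp add: cinner_scl_right)
    with \<open>c \<noteq> 0\<close> show False by simp
  qed
  have "D = spec f (\<lambda>k. 0)" unfolding f(3) by (rule spec_cong) (simp add: mu0)
  then have D0: "D = (\<lambda>i j. 0)" by (simp add: spec_def)
  have "B1 i j = B2 i j" for i j using fun_cong[OF fun_cong[OF D0, of i], of j] by (simp add: D_def)
  then show ?thesis by (simp add: fun_eq_iff)
qed

lemma absop_ex1: "\<exists>!B. psd B \<and> opmult B B = opmult (adj A) A"
  for A :: "('n::finite) op"
proof -
  obtain B where B: "psd B" "opmult B B = opmult (adj A) A" using sqrt_exists[of A] by blast
  show ?thesis
  proof (rule ex1I[of _ B])
    show "psd B \<and> opmult B B = opmult (adj A) A" using B by simp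
  next
    fix B' assume h: "psd B' \<and> opmult B' B' = opmult (adj A) A"
    then have "opmult B' B' = opmult B B" using B by simp
    with h B show "B' = B" using sqrt_unique by blast
  qed
qed

lemma absop: "psd (absop A) \<and> opmult (absop A) (absop A) = opmult (adj A) A"
  unfolding absop_def by (rule theI'[OF absop_ex1])

lemma absop_eq: "psd B \<Longrightarrow> opmult B B = opmult (adj A) A \<Longrightarrow> absop A = B"
  unfolding absop_def by (intro the1_equality[OF absop_ex1] conjI)

lemma psd_diag:
  assumes "psd B" shows "Re (B i i) \<ge> 0"
proof -
  have "Re (cinner (ev i) (mv B (ev i))) \<ge> 0" using assms unfolding psd_iff by blast
  then show ?thesis by simp
qed

lemma tnorm_nonneg: "tnorm A \<ge> 0"
proof -
  have p: "psd (absop A)" using absop by blast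
  have "0 \<le> (\<Sum>i\<in>UNIV. Re (absop A i i))" by (rule sum_nonneg) (rule psd_diag[OF p])
  then show ?thesis by (simp add: tnorm_def tr_def Re_sum)
qed


definition relab :: "('a \<Rightarrow> 'b) \<Rightarrow> 'b op \<Rightarrow> 'a op" where
  "relab \<phi> A = (\<lambda>i j. A (\<phi> i) (\<phi> j))"

lemma sum_bij:
  fixes \<phi> :: "'a::finite \<Rightarrow> 'b::finite"
  assumes "bij \<phi>"
  shows "(\<Sum>x\<in>UNIV. g (\<phi> x)) = (\<Sum>y\<in>UNIV. g y)"
  by (rule sum.reindex_bij_betw[OF assms])

lemma relab_opmult:
  fixes \<phi> :: "'a::finite \<Rightarrow> 'b::finite"
  assumes "bij \<phi>"
  shows "opmult (relab \<phi> A) (relab \<phi> B) = relab \<phi> (opmult A B)"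
  unfolding relab_def opmult_def
proof (intro ext)
  fix i k
  show "(\<Sum>j\<in>UNIV. A (\<phi> i) (\<phi> j) * B (\<phi> j) (\<phi> k)) = (\<Sum>j\<in>UNIV. A (\<phi> i) j * B j (\<phi> k))"
    using sum_bij[OF assms, of "\<lambda>j. A (\<phi> i) j * B j (\<phi> k)"] by simp
qed

lemma relab_adj: "adj (relab \<phi> A) = relab \<phi> (adj A)"
  by (simp add: adj_def relab_def)

lemma cinner_relab:
  fixes \<phi> :: "'a::finite \<Rightarrow> 'b::finite"
  assumes "bij \<phi>"
  shows "cinner (\<lambda>i. u (\<phi> i)) (\<lambda>i. v (\<phi> i)) = cinner u v"
  unfolding cinner_def using sum_bij[OF assms, of "\<lambda>y. cnj (u y) * v y"] by simp

lemma mv_relab: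
  fixes \<phi> :: "'a::finite \<Rightarrow> 'b::finite"
  assumes "bij \<phi>"
  shows "mv (relab \<phi> A) (\<lambda>i. u (\<phi> i)) = (\<lambda>i. mv A u (\<phi> i))"
  unfolding mv_def relab_def
proof (intro ext)
  fix i
  show "(\<Sum>j\<in>UNIV. A (\<phi> i) (\<phi> j) * u (\<phi> j)) = (\<Sum>j\<in>UNIV. A (\<phi> i) j * u j)"
    using sum_bij[OF assms, of "\<lambda>j. A (\<phi> i) j * u j"] by simp
qed

lemma psd_relab:
  fixes \<phi> :: "'a::finite \<Rightarrow> 'b::finite"
  assumes "bij \<phi>" "psd A"
  shows "psd (relab \<phi> A)"
  unfolding psd_iff
proof
  fix x :: "'a \<Rightarrow> complex"
  define y where "y = (\<lambda>b. x (inv \<phi> b))"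
  have x: "x = (\<lambda>i. y (\<phi> i))"
    using assms(1) by (simp add: y_def bij_is_inj fun_eq_iff)
  have "cinner x (mv (relab \<phi> A) x) = cinner y (mv A y)"
    unfolding x mv_relab[OF assms(1)] by (rule cinner_relab[OF assms(1)])
  then show "Im (cinner x (mv (relab \<phi> A) x)) = 0 \<and> 0 \<le> Re (cinner x (mv (relab \<phi> A) x))"
    using assms(2) by (simp add: psd_iff)
qed

lemma tr_relab:
  fixes \<phi> :: "'a::finite \<Rightarrow> 'b::finite"
  assumes "bij \<phi>"
  shows "tr (relab \<phi> A) = tr A"
  unfolding tr_def relab_def using sum_bij[OF assms, of "\<lambda>y. A y y"] by simp

lemma tnorm_relab:
  fixes \<phi> :: "'a::finite \<Rightarrow> 'b::finite"
  assumes "bij \<phi>"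
  shows "tnorm (relab \<phi> A) = tnorm A"
proof -
  have "absop (relab \<phi> A) = relab \<phi> (absop A)"
  proof (rule absop_eq)
    show "psd (relab \<phi> (absop A))" using psd_relab[OF assms] absop by blast
    show "opmult (relab \<phi> (absop A)) (relab \<phi> (absop A)) = opmult (adj (relab \<phi> A)) (relab \<phi> A)"
      using absop[of A] by (simp add: relab_opmult[OF assms] relab_adj)
  qed
  then show ?thesis by (simp add: tnorm_def tr_relab[OF assms])
qed

lemma sum_prod_UNIV:
  "(\<Sum>p\<in>(UNIV::('a::finite \<times> 'b::finite) set). h p) = (\<Sum>a\<in>UNIV. \<Sum>b\<in>UNIV. h (a, b))"
  by (simp add: sum.cartesian_product)

lemma tensor_opmult:
  fixes A C :: "('a::finite) op" and B D :: "('b::finite) op"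
  shows "opmult (tensor A B) (tensor C D) = tensor (opmult A C) (opmult B D)"
proof (intro ext)
  fix p q :: "'a \<times> 'b"
  obtain i k where p: "p = (i, k)" by (cases p)
  obtain j' l' where q: "q = (j', l')" by (cases q)
  have "opmult (tensor A B) (tensor C D) p q = (\<Sum>j\<in>UNIV. \<Sum>l\<in>UNIV. (A i j * C j j') * (B k l * D l l'))"
    unfolding opmult_def tensor_def p q sum_prod_UNIV by (simp add: mult_ac)
  also have "\<dots> = (\<Sum>j\<in>UNIV. A i j * C j j') * (\<Sum>l\<in>UNIV. B k l * D l l')"
    by (simp add: sum_product)
  also have "\<dots> = tensor (opmult A C) (opmult B D) p q"
    by (simp add: tensor_def opmult_def p q)
  finally show "opmult (tensor A B) (tensor C D) p q = tensor (opmult A C) (opmult B D) p q" .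
qed

lemma tensor_adj: "adj (tensor A B) = tensor (adj A) (adj B)"
  by (simp add: adj_def tensor_def fun_eq_iff split_beta)

lemma tr_tensor: "tr (tensor A B) = tr A * tr (B :: ('b::finite) op)"
  for A :: "('a::finite) op"
  unfolding tr_def tensor_def sum_prod_UNIV by (simp add: sum_product)

lemma card_pos_c: "(of_nat CARD('s::finite) :: complex) \<noteq> 0"
  by simp

lemma tr_unif: "tr (unif_op :: ('s::finite) op) = 1"
  unfolding tr_def unif_op_def by simp

lemma adj_unif: "adj (unif_op :: ('s::finite) op) = unif_op"
  by (simp add: adj_def unif_op_def fun_eq_iff)

lemma mv_tensor_unif:
  fixes A :: "('a::finite) op"
  shows "mv (tensor A (unif_op :: ('s::finite) op)) x (i, k)
      = (1 / of_nat CARD('s)) * mv A (\<lambda>j. x (j, k)) i"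
proof -
  have "mv (tensor A (unif_op :: 's op)) x (i, k)
      = (\<Sum>j\<in>UNIV. \<Sum>l\<in>UNIV. (if k = l then 1 / of_nat CARD('s) else 0) * (A i j * x (j, l)))"
    unfolding mv_def tensor_def unif_op_def sum_prod_UNIV by (simp add: mult_ac)
  also have "\<dots> = (\<Sum>j\<in>UNIV. (1 / of_nat CARD('s)) * (A i j * x (j, k)))"
    by (simp only: sum_if_delta_left)
  also have "\<dots> = (1 / of_nat CARD('s)) * mv A (\<lambda>j. x (j, k)) i"
    by (simp add: mv_def sum_distrib_left)
  finally show ?thesis .
qed

lemma psd_tensor_unif:
  fixes A :: "('a::finite) op"
  assumes "psd A"
  shows "psd (tensor A (unif_op :: ('s::finite) op))"
  unfolding psd_iff
proof
  fix x :: "'a \<times> 's \<Rightarrow> complex"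
  have "cinner x (mv (tensor A (unif_op :: 's op)) x)
      = (\<Sum>i\<in>UNIV. \<Sum>k\<in>UNIV. of_real (1 / real CARD('s)) * (cnj (x (i, k)) * mv A (\<lambda>j. x (j, k)) i))"
    unfolding cinner_def sum_prod_UNIV mv_tensor_unif by (simp add: mult_ac)
  also have "\<dots> = (\<Sum>k\<in>UNIV. \<Sum>i\<in>UNIV. of_real (1 / real CARD('s)) * (cnj (x (i, k)) * mv A (\<lambda>j. x (j, k)) i))"
    by (rule sum.swap)
  also have "\<dots> = of_real (1 / real CARD('s)) * (\<Sum>k\<in>UNIV. cinner (\<lambda>j. x (j, k)) (mv A (\<lambda>j. x (j, k))))"
    by (simp add: cinner_def sum_distrib_left)
  finally have e: "cinner x (mv (tensor A (unif_op :: 's op)) x) = \<dots>" .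
  have "Im (cinner (\<lambda>j. x (j, k)) (mv A (\<lambda>j. x (j, k)))) = 0"
       "Re (cinner (\<lambda>j. x (j, k)) (mv A (\<lambda>j. x (j, k)))) \<ge> 0" for k
    using assms by (auto simp: psd_iff)
  then show "Im (cinner x (mv (tensor A (unif_op :: 's op)) x)) = 0 \<and>
      0 \<le> Re (cinner x (mv (tensor A (unif_op :: 's op)) x))"
    unfolding e by (simp add: Im_sum Re_sum sum_nonneg)
qed

lemma density_tensor_unif:
  fixes A :: "('a::finite) op"
  assumes "density A"
  shows "density (tensor A (unif_op :: ('s::finite) op))"
proof -
  have "psd (tensor A (unif_op :: 's op))" using assms by (intro psd_tensor_unif) (simp add: density_def)
  then show ?thesis using assms by (simp add: density_def tr_tensor tr_unif)
qed

lemma tnorm_tensor_unif: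
  fixes A :: "('a::finite) op"
  shows "tnorm (tensor A (unif_op :: ('s::finite) op)) = tnorm A"
proof -
  have "absop (tensor A (unif_op :: 's op)) = tensor (absop A) unif_op"
  proof (rule absop_eq)
    show "psd (tensor (absop A) (unif_op :: 's op))" using psd_tensor_unif absop by blast
    show "opmult (tensor (absop A) (unif_op :: 's op)) (tensor (absop A) unif_op)
        = opmult (adj (tensor A unif_op)) (tensor A unif_op)"
      using absop[of A] by (simp add: tensor_opmult tensor_adj adj_unif)
  qed
  then show ?thesis by (simp add: tnorm_def tr_tensor tr_unif)
qed


lemma psd_unif: "psd (unif_op :: ('s::finite) op)"
  unfolding psd_iff
proof
  fix x :: "'s \<Rightarrow> complex"
  have "mv (unif_op :: 's op) x = scl (of_real (1 / real CARD('s))) x"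
    by (simp add: mv_def unif_op_def scl_def fun_eq_iff if_distrib[of "\<lambda>z. z * _"] cong: if_cong)
  then have "cinner x (mv (unif_op :: 's op) x) = of_real (1 / real CARD('s)) * of_real (Re (cinner x x))"
    by (simp add: cinner_scl_right flip: cinner_self_real)
  then show "Im (cinner x (mv (unif_op :: 's op) x)) = 0 \<and> 0 \<le> Re (cinner x (mv (unif_op :: 's op) x))"
    using cinner_self_Re_ge[of x] by (simp only: of_real_mult[symmetric] Im_complex_of_real Re_complex_of_real) simp
qed

lemma density_unif: "density (unif_op :: ('s::finite) op)"
  by (simp add: density_def psd_unif tr_unif)

lemma card_prod_UNIV: "CARD('a::finite \<times> 'b::finite) = CARD('a) * CARD('b)"
  by (simp add: UNIV_Times_UNIV[symmetric] card_cartesian_product del: UNIV_Times_UNIV)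

theorem lemma3:
  fixes g :: "'s::finite \<Rightarrow> 'm::finite \<Rightarrow> 'y::finite \<Rightarrow> 'y"
    and rho :: "'m \<times> 'y \<Rightarrow> ('e::finite) op"
  assumes univ: "\<And>m y m' y'. (m, y) \<noteq> (m', y') \<Longrightarrow>
      real (card {s. g s m y = g s m' y'}) / real (card (UNIV :: 's set)) \<le> 1 / real (card (UNIV :: 'y set))"
    and inv: "\<And>m c s. \<exists>!y. g s m y = c"
    and dens: "\<And>my. density (rho my)"
  shows "dcq (\<lambda>m::'m. 1 / real (card (UNIV :: 'm set)))
           (\<lambda>m. \<lambda>(e, s, c) (e', s', c'). if s = s' \<and> c = c'
               then (\<Sum>y\<in>{y. g s m y = c}. rho (m, y) e e')
                    / (of_nat (card (UNIV :: 'y set)) * of_nat (card (UNIV :: 's set)))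
               else 0)
         \<le> dcq (\<lambda>my::'m \<times> 'y. 1 / (real (card (UNIV :: 'm set)) * real (card (UNIV :: 'y set)))) rho"
proof -
  have ex: "\<exists>!y. g s m y = c" for s m c using inv by blast
  define yof where "yof = (\<lambda>s m c. THE y. g s m y = c)"
  have g_yof: "g s m (yof s m c) = c" for s m c unfolding yof_def by (rule theI'[OF ex])
  have yof_g: "yof s m (g s m y) = y" for s m y unfolding yof_def by (rule the1_equality[OF ex]) simp
  have set1: "{y. g s m y = c} = {yof s m c}" for s m c using g_yof yof_g by auto
  define \<phi> :: "'m \<times> 'e \<times> 's \<times> 'y \<Rightarrow> (('m \<times> 'y) \<times> 'e) \<times> 's"
    where "\<phi> = (\<lambda>(m, e, s, c). (((m, yof s m c), e), s))"
  define \<psi> :: "(('m \<times> 'y) \<times> 'e) \<times> 's \<Rightarrow> 'm \<times> 'e \<times> 's \<times> 'y"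
    where "\<psi> = (\<lambda>(((m, y), e), s). (m, e, s, g s m y))"
  have bij: "bij \<phi>" by (rule o_bij[of \<psi>]) (auto simp: \<phi>_def \<psi>_def fun_eq_iff g_yof yof_g)
  define PL where "PL = (\<lambda>m::'m. 1 / real (card (UNIV :: 'm set)))"
  define rhoL where "rhoL = (\<lambda>m. \<lambda>(e, s, c) (e', s', c'). if s = s' \<and> c = c'
               then (\<Sum>y\<in>{y. g s m y = c}. rho (m, y) e e')
                    / (of_nat (card (UNIV :: 'y set)) * of_nat (card (UNIV :: 's set)))
               else 0)"
  define PR where "PR = (\<lambda>my::'m \<times> 'y. 1 / (real (card (UNIV :: 'm set)) * real (card (UNIV :: 'y set))))"
  have "dcq PL rhoL \<le> dcq PR rho"
    unfolding dcq_def
  proof (rule cInf_superset_mono)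
    show "{tnorm (\<lambda>a b. cq PR rho a b - tensor unif_op sigma a b) |sigma::'e op. density sigma} \<noteq> {}"
      using density_unif by blast
    show "bdd_below {tnorm (\<lambda>a b. cq PL rhoL a b - tensor unif_op sigma a b) |sigma::('e \<times> 's \<times> 'y) op. density sigma}"
      by (rule bdd_belowI[of _ 0]) (auto simp: tnorm_nonneg)
    show "{tnorm (\<lambda>a b. cq PR rho a b - tensor unif_op sigma a b) |sigma::'e op. density sigma}
      \<subseteq> {tnorm (\<lambda>a b. cq PL rhoL a b - tensor unif_op sigma a b) |sigma::('e \<times> 's \<times> 'y) op. density sigma}"
    proof
      fix t assume "t \<in> {tnorm (\<lambda>a b. cq PR rho a b - tensor unif_op sigma a b) |sigma::'e op. density sigma}"
      then obtain \<sigma> :: "'e op" where t: "t = tnorm (\<lambda>a b. cq PR rho a b - tensor unif_op \<sigma> a b)"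
        and d: "density \<sigma>" by blast
      define \<sigma>' where "\<sigma>' = tensor \<sigma> (unif_op :: ('s \<times> 'y) op)"
      have d': "density \<sigma>'" unfolding \<sigma>'_def by (rule density_tensor_unif[OF d])
      have key: "(\<lambda>a b. cq PL rhoL a b - tensor unif_op \<sigma>' a b)
          = relab \<phi> (tensor (\<lambda>a b. cq PR rho a b - tensor unif_op \<sigma> a b) (unif_op :: 's op))"
      proof (intro ext)
        fix a b :: "'m \<times> 'e \<times> 's \<times> 'y"
        obtain m e s c where a: "a = (m, e, s, c)" by (cases a) auto
        obtain m2 e2 s2 c2 where b: "b = (m2, e2, s2, c2)" by (cases b) auto
        have yy: "yof s' m' c' = yof s' m' c'' \<longleftrightarrow> c' = c''" for s' m' c' c'' using g_yof by metis
        show "cq PL rhoL a b - tensor unif_op \<sigma>' a b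
          = relab \<phi> (tensor (\<lambda>a b. cq PR rho a b - tensor unif_op \<sigma> a b) (unif_op :: 's op)) a b"
          unfolding a b
          by (cases "m = m2"; cases "s = s2"; cases "c = c2")
             (auto simp: cq_def tensor_def unif_op_def relab_def \<phi>_def PL_def PR_def rhoL_def \<sigma>'_def
               set1 yy card_prod_UNIV field_simps)
      qed
      have "t = tnorm (\<lambda>a b. cq PL rhoL a b - tensor unif_op \<sigma>' a b)"
        unfolding key t tnorm_relab[OF bij] tnorm_tensor_unif ..
      then show "t \<in> {tnorm (\<lambda>a b. cq PL rhoL a b - tensor unif_op sigma a b) |sigma::('e \<times> 's \<times> 'y) op. density sigma}"
        using d' by blast
    qed
  qed
  then show ?thesis unfolding PL_def rhoL_def PR_def .
qed

end
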